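(* Let $k$ be a natural number, let $(X,\Sigma)$ be a measurable space, and let $\mu,\nu$ be finite measures on $(X,\Sigma)$ with $\mu$ absolutely continuous with respect to $\nu$; let $f\colon X\to[0,\infty)$ be a (measurable) Radon–Nikodym derivative $f=\frac{d\mu}{d\nu}$. Assume that one of the following holds: (I) $G=\mathbb{R}$ and $\nu$ is non-atomic; or (II) $G=\mathbb{Z}$, $X$ is finite, $\Sigma=2^X$, and $\nu$ is the counting measure. Let $q=(q_1,\dots,q_k)\in(G\cap[0,\infty))^k$ satisfy $q_1+\dots+q_k=\nu(X)$. Then there exists a partition $Q=(B_1,\dots,B_k)\in\mathcal{P}_{\nu,q}$ such that for all $i,j\in[k]$ with $i<j$, $$\sup_{B_i}f\le\inf_{B_j}f,$$ with the conventions $\sup\emptyset=-\infty$ and $\inf\emptyset=\infty$.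
   Context: $[k]:=\{1,\dots,k\}$. $\mathcal{P}_k$ denotes the set of all ordered partitions $P=(A_1,\dots,A_k)$ of $X$ with $A_i\in\Sigma$ for all $i$ (i.e. the $A_i$ are pairwise disjoint measurable sets, possibly empty, whose union is $X$). $\mathcal{P}_{\nu,q}:=\{P=(A_1,\dots,A_k)\in\mathcal{P}_k:\ \nu(A_i)=q_i\ \text{for all } i\in[k]\}$. *)

theory Defs
  imports "HOL-Analysis.Analysis"
begin

definition nonatomic :: "'a measure \<Rightarrow> bool" where
  "nonatomic M \<longleftrightarrow>
     (\<forall>A\<in>sets M. 0 < emeasure M A \<longrightarrow>
        (\<exists>B\<in>sets M. B \<subseteq> A \<and> 0 < emeasure M B \<and> emeasure M B < emeasure M A))"

definition partitions_nu_q :: "'a measure \<Rightarrow> nat \<Rightarrow> (nat \<Rightarrow> real) \<Rightarrow> (nat \<Rightarrow> 'a set) set" where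
  "partitions_nu_q M k q =
     {B. (\<forall>i\<in>{1..k}. B i \<in> sets M) \<and>
         (\<forall>i\<in>{1..k}. \<forall>j\<in>{1..k}. i \<noteq> j \<longrightarrow> B i \<inter> B j = {}) \<and>
         (\<Union>i\<in>{1..k}. B i) = space M \<and>
         (\<forall>i\<in>{1..k}. measure M (B i) = q i)}"

end

theory Submission imports Defs begin

lemma halve:
  assumes fm: "finite_measure M" and na: "nonatomic M" and A: "A \<in> sets M" and pos: "0 < measure M A"
  shows "\<exists>B\<in>sets M. B \<subseteq> A \<and> 0 < measure M B \<and> measure M B \<le> measure M A / 2"
proof -
  interpret finite_measure M by fact
  have "0 < emeasure M A" using pos by (simp add: emeasure_eq_measure)
  then obtain B where B: "B \<in> sets M" "B \<subseteq> A" "0 < emeasure M B" "emeasure M B < emeasure M A"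
    using na A unfolding nonatomic_def by blast
  have B1: "0 < measure M B" "measure M B < measure M A"
    using B by (auto simp: emeasure_eq_measure ennreal_less_iff)
  show ?thesis
  proof (cases "measure M B \<le> measure M A / 2")
    case True thus ?thesis using B B1 by blast
  next
    case False
    have "measure M (A - B) = measure M A - measure M B"
      using B A by (simp add: finite_measure_Diff)
    thus ?thesis using B B1 False A by (intro bexI[of _ "A - B"]) auto
  qed
qed

lemma small:
  assumes fm: "finite_measure M" and na: "nonatomic M" and A: "A \<in> sets M" and pos: "0 < measure M A"
    and e: "0 < e"
  shows "\<exists>B\<in>sets M. B \<subseteq> A \<and> 0 < measure M B \<and> measure M B < e"
proof -
  have "\<forall>n. \<exists>B\<in>sets M. B \<subseteq> A \<and> 0 < measure M B \<and> measure M B \<le> measure M A / 2 ^ n"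
  proof
    fix n show "\<exists>B\<in>sets M. B \<subseteq> A \<and> 0 < measure M B \<and> measure M B \<le> measure M A / 2 ^ n"
    proof (induction n)
      case 0 thus ?case using A pos by auto
    next
      case (Suc n)
      then obtain B where B: "B\<in>sets M" "B \<subseteq> A" "0 < measure M B" "measure M B \<le> measure M A / 2 ^ n" by blast
      then obtain C where C: "C\<in>sets M" "C \<subseteq> B" "0 < measure M C" "measure M C \<le> measure M B / 2"
        using halve[OF fm na] by blast
      have "measure M B / 2 \<le> measure M A / 2 ^ n / 2" using B(4) by (rule divide_right_mono) simp
      moreover have "measure M A / 2 ^ n / 2 = measure M A / 2 ^ Suc n" by simp
      ultimately have "measure M C \<le> measure M A / 2 ^ Suc n" using C(4) by linarith
      thus ?case using B C by blast
    qed
  qed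
  moreover obtain n where "measure M A / 2 ^ n < e"
  proof -
    obtain n where "(1/2::real) ^ n < e / measure M A"
      using real_arch_pow_inv[of "e / measure M A" "1/2"] e pos by auto
    hence "measure M A * (1/2) ^ n < e" using pos by (simp add: field_simps)
    thus ?thesis using that by (simp add: field_simps power_one_over)
  qed
  ultimately obtain B where "B\<in>sets M" "B \<subseteq> A" "0 < measure M B" "measure M B \<le> measure M A / 2 ^ n"
    by blast
  with \<open>measure M A / 2 ^ n < e\<close> show ?thesis by (intro bexI[of _ B]) auto
qed

lemma sierpinski:
  assumes fm: "finite_measure M" and na: "nonatomic M" and E: "E \<in> sets M"
    and r0: "0 \<le> r" and rE: "r \<le> measure M E"
  shows "\<exists>C\<in>sets M. C \<subseteq> E \<and> measure M C = r"
proof -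
  interpret finite_measure M by fact
  define cand where "cand C = {D \<in> sets M. D \<subseteq> E - C \<and> measure M D \<le> r - measure M C}" for C
  define s where "s C = Sup (measure M ` cand C)" for C
  define nxt where "nxt C = (SOME D. D \<in> cand C \<and> s C / 2 \<le> measure M D)" for C
  have bdd: "bdd_above (measure M ` cand C)" for C
    by (rule bdd_aboveI[of _ "measure M (space M)"]) (auto simp: cand_def bounded_measure)
  have nxt: "nxt C \<in> cand C \<and> s C / 2 \<le> measure M (nxt C)" if "measure M C \<le> r" for C
  proof -
    have ne: "{} \<in> cand C" using that by (auto simp: cand_def)
    have "\<exists>D. D \<in> cand C \<and> s C / 2 \<le> measure M D"
    proof (cases "s C \<le> 0")
      case True thus ?thesis using ne by (intro exI[of _ "{}"]) auto
    next
      case False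
      hence "s C / 2 < Sup (measure M ` cand C)" by (simp add: s_def)
      then obtain x where "x \<in> measure M ` cand C" "s C / 2 < x"
        using less_cSupE[of "s C / 2" "measure M ` cand C"] ne by blast
      thus ?thesis by force
    qed
    thus ?thesis unfolding nxt_def by (rule someI_ex)
  qed
  define Cs where "Cs n = rec_nat {} (\<lambda>_ C. C \<union> nxt C) n" for n
  have Cs0: "Cs 0 = {}" and CsS: "Cs (Suc n) = Cs n \<union> nxt (Cs n)" for n by (simp_all add: Cs_def)
  have inv: "Cs n \<in> sets M \<and> Cs n \<subseteq> E \<and> measure M (Cs n) \<le> r" for n
  proof (induction n)
    case 0 thus ?case using r0 by (simp add: Cs0)
  next
    case (Suc n)
    have N: "nxt (Cs n) \<in> cand (Cs n)" using nxt Suc by blast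
    hence N': "nxt (Cs n) \<in> sets M" "nxt (Cs n) \<subseteq> E - Cs n" "measure M (nxt (Cs n)) \<le> r - measure M (Cs n)"
      by (auto simp: cand_def)
    have "measure M (Cs (Suc n)) = measure M (Cs n) + measure M (nxt (Cs n))"
      unfolding CsS using Suc N' by (intro finite_measure_Union) auto
    thus ?case using Suc N' unfolding CsS by auto
  qed
  have step: "measure M (Cs (Suc n)) = measure M (Cs n) + measure M (nxt (Cs n))" for n
  proof -
    have N: "nxt (Cs n) \<in> cand (Cs n)" using nxt inv by blast
    thus ?thesis unfolding CsS using inv[of n] by (intro finite_measure_Union) (auto simp: cand_def)
  qed
  define C where "C = (\<Union>n. Cs n)"
  have inc: "incseq Cs" by (rule incseq_SucI) (auto simp: CsS)
  have lim: "(\<lambda>n. measure M (Cs n)) \<longlonglongrightarrow> measure M C"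
    unfolding C_def using inv inc by (intro finite_Lim_measure_incseq) auto
  have Csets: "C \<in> sets M" "C \<subseteq> E" using inv by (auto simp: C_def)
  have Cr: "measure M C \<le> r"
    by (rule LIMSEQ_le_const2[OF lim]) (use inv in auto)
  have "measure M C = r"
  proof (rule ccontr)
    assume "measure M C \<noteq> r"
    hence lt: "measure M C < r" using Cr by auto
    have "measure M (E - C) = measure M E - measure M C"
      using Csets E by (simp add: finite_measure_Diff)
    hence "0 < measure M (E - C)" using lt rE by simp
    then obtain D where D: "D \<in> sets M" "D \<subseteq> E - C" "0 < measure M D" "measure M D < r - measure M C"
      using small[OF fm na, of "E - C" "r - measure M C"] Csets E lt by auto
    have CsC: "measure M (Cs n) \<le> measure M C" for n
      using Csets by (intro finite_measure_mono) (auto simp: C_def)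
    have Dc: "D \<in> cand (Cs n)" for n
      using D CsC[of n] by (auto simp: cand_def C_def)
    have half: "measure M D / 2 \<le> measure M (nxt (Cs n))" for n
    proof -
      have "measure M D \<le> s (Cs n)" unfolding s_def using Dc bdd by (intro cSup_upper) auto
      thus ?thesis using nxt[of "Cs n"] inv[of n] by linarith
    qed
    have grow: "real n * (measure M D / 2) \<le> measure M (Cs n)" for n
    proof (induction n)
      case 0 thus ?case by (simp add: Cs0)
    next
      case (Suc n)
      have "real (Suc n) * (measure M D / 2) = real n * (measure M D / 2) + measure M D / 2"
        by (simp add: algebra_simps)
      thus ?case using Suc step[of n] half[of n] by linarith
    qed
    obtain n where "r / (measure M D / 2) < real n" using reals_Archimedean2 by blast
    hence "r < real n * (measure M D / 2)" using D(3) by (simp add: field_simps)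
    thus False using grow[of n] inv[of n] by linarith
  qed
  thus ?thesis using Csets by blast
qed

lemma key:
  fixes f :: "'a \<Rightarrow> real"
  assumes fm: "finite_measure M" and fmeas: "f \<in> borel_measurable M"
    and fpos: "\<forall>x\<in>space M. 0 \<le> f x"
    and ADM: "\<forall>a\<in>Adm. \<forall>A\<in>sets M. a - measure M A \<in> Adm"
    and SPL: "\<forall>E\<in>sets M. \<forall>r\<in>Adm. 0 \<le> r \<longrightarrow> r \<le> measure M E \<longrightarrow> (\<exists>C\<in>sets M. C \<subseteq> E \<and> measure M C = r)"
    and S: "S \<in> sets M" and t0: "0 \<le> t" and tS: "t \<le> measure M S" and tA: "t \<in> Adm"
  shows "\<exists>B\<in>sets M. B \<subseteq> S \<and> measure M B = t \<and> (\<forall>x\<in>B. \<forall>y\<in>S - B. f x \<le> f y)"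
proof -
  interpret finite_measure M by fact
  have Ssp: "S \<subseteq> space M" using S sets.sets_into_space by blast
  have le_sets: "{x\<in>S. f x \<le> c} \<in> sets M" for c
  proof -
    have eq: "{x\<in>S. f x \<le> c} = S \<inter> {x\<in>space M. f x \<le> c}" using Ssp by auto
    have m: "{x\<in>space M. f x \<le> c} \<in> sets M" using fmeas unfolding borel_measurable_iff_le by blast
    show ?thesis unfolding eq by (rule sets.Int[OF S m])
  qed
  have lt_sets: "{x\<in>S. f x < c} \<in> sets M" for c
  proof -
    have eq: "{x\<in>S. f x < c} = S \<inter> {x\<in>space M. f x < c}" using Ssp by auto
    have m: "{x\<in>space M. f x < c} \<in> sets M" using fmeas unfolding borel_measurable_iff_less by blast
    show ?thesis unfolding eq by (rule sets.Int[OF S m])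
  qed
  have eq_sets: "{x\<in>S. f x = c} \<in> sets M" for c
  proof -
    have eq: "{x\<in>S. f x = c} = S \<inter> {x\<in>space M. f x = c}" using Ssp by auto
    have m: "{x\<in>space M. f x = c} \<in> sets M"
    proof -
      have eq2: "{x\<in>space M. f x = c} = {x\<in>space M. f x \<le> c} \<inter> {x\<in>space M. c \<le> f x}" by auto
      have m1: "{x\<in>space M. f x \<le> c} \<in> sets M" using fmeas unfolding borel_measurable_iff_le by blast
      have m2: "{x\<in>space M. c \<le> f x} \<in> sets M" using fmeas unfolding borel_measurable_iff_ge by blast
      show ?thesis unfolding eq2 by (rule sets.Int[OF m1 m2])
    qed
    show ?thesis unfolding eq by (rule sets.Int[OF S m])
  qed
  show ?thesis
  proof (cases "t = 0 \<or> t = measure M S")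
    case True
    thus ?thesis
    proof
      assume "t = 0" thus ?thesis by (intro bexI[of _ "{}"]) auto
    next
      assume "t = measure M S" thus ?thesis using S by (intro bexI[of _ S]) auto
    qed
  next
    case False
    hence tpos: "0 < t" and tlt: "t < measure M S" using t0 tS by auto
    define h where "h c = measure M {x\<in>S. f x \<le> c}" for c
    define A where "A = {c. t \<le> h c}"
    have hmono: "h a \<le> h b" if "a \<le> b" for a b
      unfolding h_def using that le_sets by (intro finite_measure_mono) auto
    have "(\<lambda>n. h (real n)) \<longlonglongrightarrow> measure M (\<Union>n. {x\<in>S. f x \<le> real n})"
      unfolding h_def using le_sets
      by (intro finite_Lim_measure_incseq) (auto simp: incseq_def intro: order_trans)
    moreover have "(\<Union>n. {x\<in>S. f x \<le> real n}) = S"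
      using real_arch_simple by auto
    ultimately have hlim: "(\<lambda>n. h (real n)) \<longlonglongrightarrow> measure M S" by simp
    have "eventually (\<lambda>n. t < h (real n)) sequentially" by (rule order_tendstoD(1)[OF hlim tlt])
    then obtain N where "\<forall>n\<ge>N. t < h (real n)" unfolding eventually_sequentially by blast
    hence "t < h (real N)" by blast
    hence Ane: "real N \<in> A" by (simp add: A_def)
    have Abdd: "bdd_below A"
    proof (rule bdd_belowI[of _ 0])
      fix c assume "c \<in> A"
      show "0 \<le> c"
      proof (rule ccontr)
        assume "\<not> 0 \<le> c"
        hence "{x\<in>S. f x \<le> c} = {}" using fpos Ssp by force
        hence "h c = 0" unfolding h_def by (metis measure_empty)
        thus False using \<open>c \<in> A\<close> tpos by (simp add: A_def)
      qed
    qed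
    define c where "c = Inf A"
    have hc: "t \<le> h c"
    proof -
      have "(\<lambda>n. h (c + 1 / real (Suc n))) \<longlonglongrightarrow> measure M (\<Inter>n. {x\<in>S. f x \<le> c + 1 / real (Suc n)})"
        unfolding h_def using le_sets
      proof (intro finite_Lim_measure_decseq)
        show "decseq (\<lambda>n. {x\<in>S. f x \<le> c + 1 / real (Suc n)})"
        proof (rule decseq_SucI)
          fix n
          have "1 / real (Suc (Suc n)) \<le> 1 / real (Suc n)" by (simp add: frac_le)
          thus "{x\<in>S. f x \<le> c + 1 / real (Suc (Suc n))} \<subseteq> {x\<in>S. f x \<le> c + 1 / real (Suc n)}"
            by auto
        qed
      qed auto
      moreover have "(\<Inter>n. {x\<in>S. f x \<le> c + 1 / real (Suc n)}) = {x\<in>S. f x \<le> c}"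
      proof (intro set_eqI iffI)
        fix x assume x: "x \<in> (\<Inter>n. {x\<in>S. f x \<le> c + 1 / real (Suc n)})"
        hence xS: "x \<in> S" by blast
        have "f x \<le> c"
        proof (rule ccontr)
          assume "\<not> f x \<le> c"
          hence "0 < f x - c" by simp
          from reals_Archimedean[OF this] obtain n where "inverse (real (Suc n)) < f x - c" by blast
          hence n: "1 / real (Suc n) < f x - c" by (simp add: inverse_eq_divide)
          have "f x \<le> c + 1 / real (Suc n)" using x by blast
          thus False using n by linarith
        qed
        thus "x \<in> {x\<in>S. f x \<le> c}" using xS by simp
      next
        fix x assume x: "x \<in> {x\<in>S. f x \<le> c}"
        have "f x \<le> c + 1 / real (Suc n)" for n
        proof -
          have "0 \<le> 1 / real (Suc n)" by simp
          moreover have "f x \<le> c" using x by simp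
          ultimately show ?thesis by linarith
        qed
        thus "x \<in> (\<Inter>n. {x\<in>S. f x \<le> c + 1 / real (Suc n)})" using x by simp
      qed
      ultimately have L: "(\<lambda>n. h (c + 1 / real (Suc n))) \<longlonglongrightarrow> h c" by (simp add: h_def)
      show ?thesis
      proof (rule LIMSEQ_le_const[OF L], intro exI allI impI)
        fix n
        have "c < c + 1 / real (Suc n)" by simp
        hence "Inf A < c + 1 / real (Suc n)" by (simp add: c_def)
        hence "\<exists>a\<in>A. a < c + 1 / real (Suc n)" using Ane by (intro cInf_lessD) auto
        then obtain a where "a \<in> A" "a < c + 1 / real (Suc n)" by blast
        hence "t \<le> h a" "h a \<le> h (c + 1 / real (Suc n))" by (auto simp: A_def intro: hmono)
        thus "t \<le> h (c + 1 / real (Suc n))" by linarith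
      qed
    qed
    define L where "L = {x\<in>S. f x < c}"
    define Ec where "Ec = {x\<in>S. f x = c}"
    have Lsets: "L \<in> sets M" "Ec \<in> sets M" using lt_sets eq_sets by (auto simp: L_def Ec_def)
    have gt: "measure M L \<le> t"
    proof -
      have "(\<lambda>n. h (c - 1 / real (Suc n))) \<longlonglongrightarrow> measure M (\<Union>n. {x\<in>S. f x \<le> c - 1 / real (Suc n)})"
        unfolding h_def using le_sets
      proof (intro finite_Lim_measure_incseq)
        show "incseq (\<lambda>n. {x\<in>S. f x \<le> c - 1 / real (Suc n)})"
        proof (rule incseq_SucI)
          fix n
          have "1 / real (Suc (Suc n)) \<le> 1 / real (Suc n)" by (simp add: frac_le)
          thus "{x\<in>S. f x \<le> c - 1 / real (Suc n)} \<subseteq> {x\<in>S. f x \<le> c - 1 / real (Suc (Suc n))}"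
            by auto
        qed
      qed auto
      moreover have "(\<Union>n. {x\<in>S. f x \<le> c - 1 / real (Suc n)}) = L"
      proof (intro set_eqI iffI)
        fix x assume x: "x \<in> L"
        hence xS: "x \<in> S" and "f x < c" by (simp_all add: L_def)
        hence "0 < c - f x" by simp
        from reals_Archimedean[OF this] obtain n where "inverse (real (Suc n)) < c - f x" by blast
        hence n: "1 / real (Suc n) < c - f x" by (simp add: inverse_eq_divide)
        hence "f x \<le> c - 1 / real (Suc n)" by linarith
        thus "x \<in> (\<Union>n. {x\<in>S. f x \<le> c - 1 / real (Suc n)})" using xS by blast
      next
        fix x assume "x \<in> (\<Union>n. {x\<in>S. f x \<le> c - 1 / real (Suc n)})"
        then obtain n where xS: "x \<in> S" and le: "f x \<le> c - 1 / real (Suc n)" by blast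
        have "0 < 1 / real (Suc n)" by simp
        hence "f x < c" using le by linarith
        thus "x \<in> L" using xS by (simp add: L_def)
      qed
      ultimately have Lm: "(\<lambda>n. h (c - 1 / real (Suc n))) \<longlonglongrightarrow> measure M L" by simp
      show ?thesis
      proof (rule LIMSEQ_le_const2[OF Lm], intro exI allI impI)
        fix n
        have "c - 1 / real (Suc n) < Inf A" by (simp add: c_def)
        hence "c - 1 / real (Suc n) \<notin> A" using Abdd by (meson cInf_lower not_le)
        thus "h (c - 1 / real (Suc n)) \<le> t" by (auto simp: A_def)
      qed
    qed
    have LE: "{x\<in>S. f x \<le> c} = L \<union> Ec" "L \<inter> Ec = {}" by (auto simp: L_def Ec_def)
    have hsplit: "h c = measure M L + measure M Ec"
      unfolding h_def LE(1) using Lsets LE(2) by (intro finite_measure_Union) auto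
    define r where "r = t - measure M L"
    have rA: "r \<in> Adm" using ADM tA Lsets by (auto simp: r_def)
    have r0: "0 \<le> r" using gt by (simp add: r_def)
    have rle: "r \<le> measure M Ec" using hc hsplit by (simp add: r_def)
    have "\<exists>C\<in>sets M. C \<subseteq> Ec \<and> measure M C = r" using SPL Lsets(2) rA r0 rle by blast
    then obtain C where C: "C \<in> sets M" "C \<subseteq> Ec" "measure M C = r" by blast
    have "measure M (L \<union> C) = measure M L + measure M C"
      using Lsets C LE(2) by (intro finite_measure_Union) auto
    hence m1: "measure M (L \<union> C) = t" using C by (simp add: r_def)
    have m2: "\<forall>x\<in>L \<union> C. \<forall>y\<in>S - (L \<union> C). f x \<le> f y"
    proof (intro ballI)
      fix x y assume x: "x \<in> L \<union> C" and y: "y \<in> S - (L \<union> C)"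
      have "f x \<le> c"
      proof (cases "x \<in> L")
        case True thus ?thesis by (simp add: L_def)
      next
        case False hence "x \<in> Ec" using x C(2) by blast
        thus ?thesis by (simp add: Ec_def)
      qed
      moreover have "y \<in> S" "y \<notin> L" using y by blast+
      hence "c \<le> f y" by (simp add: L_def)
      ultimately show "f x \<le> f y" by linarith
    qed
    have m3: "L \<union> C \<subseteq> S" using C(2) unfolding L_def Ec_def by blast
    have m4: "L \<union> C \<in> sets M" by (intro sets.Un Lsets(1) C(1))
    have "L \<union> C \<subseteq> S \<and> measure M (L \<union> C) = t \<and> (\<forall>x\<in>L \<union> C. \<forall>y\<in>S - (L \<union> C). f x \<le> f y)"
      using m1 m2 m3 by (simp only: simp_thms)
    with m4 show ?thesis by (rule rev_bexI)
  qed
qed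


lemma sum_Adm:
  assumes ADD: "\<forall>a\<in>Adm. \<forall>b\<in>Adm. a + b \<in> Adm" and Z: "(0::real) \<in> Adm"
  shows "finite I \<Longrightarrow> (\<forall>i\<in>I. q i \<in> Adm) \<Longrightarrow> sum q I \<in> Adm"
proof (induction I rule: finite_induct)
  case empty thus ?case using Z by simp
next
  case (insert x F) thus ?case using ADD by simp
qed

lemma part:
  fixes f :: "'a \<Rightarrow> real" and q :: "nat \<Rightarrow> real"
  assumes fm: "finite_measure M" and fmeas: "f \<in> borel_measurable M"
    and fpos: "\<forall>x\<in>space M. 0 \<le> f x"
    and ADM: "\<forall>a\<in>Adm. \<forall>A\<in>sets M. a - measure M A \<in> Adm"
    and SPL: "\<forall>E\<in>sets M. \<forall>r\<in>Adm. 0 \<le> r \<longrightarrow> r \<le> measure M E \<longrightarrow> (\<exists>C\<in>sets M. C \<subseteq> E \<and> measure M C = r)"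
    and ADD: "\<forall>a\<in>Adm. \<forall>b\<in>Adm. a + b \<in> Adm" and Z: "0 \<in> Adm"
  shows "1 \<le> k \<Longrightarrow> S \<in> sets M \<Longrightarrow> (\<forall>i\<in>{1..k}. q i \<in> Adm \<and> 0 \<le> q i) \<Longrightarrow>
    (\<Sum>i=1..k. q i) = measure M S \<Longrightarrow>
    \<exists>B. (\<forall>i\<in>{1..k}. B i \<in> sets M \<and> B i \<subseteq> S) \<and>
        (\<forall>i\<in>{1..k}. \<forall>j\<in>{1..k}. i \<noteq> j \<longrightarrow> B i \<inter> B j = {}) \<and>
        (\<Union>i\<in>{1..k}. B i) = S \<and> (\<forall>i\<in>{1..k}. measure M (B i) = q i) \<and>
        (\<forall>i\<in>{1..k}. \<forall>j\<in>{1..k}. i < j \<longrightarrow> (\<forall>x\<in>B i. \<forall>y\<in>B j. f x \<le> f y))"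
proof (induction k arbitrary: S rule: nat_induct_at_least)
  case base
  have "measure M S = q 1" using base by simp
  hence "(\<forall>i\<in>{1..1::nat}. (\<lambda>_. S) i \<in> sets M \<and> (\<lambda>_. S) i \<subseteq> S) \<and>
        (\<forall>i\<in>{1..1::nat}. \<forall>j\<in>{1..1}. i \<noteq> j \<longrightarrow> (\<lambda>_. S) i \<inter> (\<lambda>_. S) j = {}) \<and>
        (\<Union>i\<in>{1..1::nat}. (\<lambda>_. S) i) = S \<and> (\<forall>i\<in>{1..1}. measure M ((\<lambda>_. S) i) = q i) \<and>
        (\<forall>i\<in>{1..1::nat}. \<forall>j\<in>{1..1}. i < j \<longrightarrow> (\<forall>x\<in>(\<lambda>_. S) i. \<forall>y\<in>(\<lambda>_. S) j. f x \<le> f y))"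
    using base by auto
  thus ?case by (rule exI[of _ "\<lambda>_. S"])
next
  case (Suc k)
  interpret finite_measure M by fact
  define T where "T = (\<Sum>i=1..k. q i)"
  have sumS: "(\<Sum>i=1..Suc k. q i) = T + q (Suc k)" unfolding T_def by simp
  have TA: "T \<in> Adm" unfolding T_def using Suc.prems(2) by (intro sum_Adm[OF ADD Z]) auto
  have T0: "0 \<le> T" unfolding T_def using Suc.prems(2) by (intro sum_nonneg) auto
  have qS: "0 \<le> q (Suc k)" using Suc.prems(2) by auto
  have TS: "T \<le> measure M S" using Suc.prems(3) sumS qS by linarith
  obtain L where L: "L \<in> sets M" "L \<subseteq> S" "measure M L = T" "\<forall>x\<in>L. \<forall>y\<in>S - L. f x \<le> f y"
    using key[OF fm fmeas fpos ADM SPL Suc.prems(1) T0 TS TA] by blast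
  have "\<forall>i\<in>{1..k}. q i \<in> Adm \<and> 0 \<le> q i" using Suc.prems(2) by auto
  moreover have "(\<Sum>i=1..k. q i) = measure M L" using L(3) by (simp add: T_def)
  ultimately obtain B where B:
    "\<forall>i\<in>{1..k}. B i \<in> sets M \<and> B i \<subseteq> L"
    "\<forall>i\<in>{1..k}. \<forall>j\<in>{1..k}. i \<noteq> j \<longrightarrow> B i \<inter> B j = {}"
    "(\<Union>i\<in>{1..k}. B i) = L" "\<forall>i\<in>{1..k}. measure M (B i) = q i"
    "\<forall>i\<in>{1..k}. \<forall>j\<in>{1..k}. i < j \<longrightarrow> (\<forall>x\<in>B i. \<forall>y\<in>B j. f x \<le> f y)"
    using Suc.IH[OF L(1)] by blast
  define B' where "B' = B(Suc k := S - L)"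
  have SL: "S - L \<in> sets M" using Suc.prems(1) L(1) by blast
  have mSL: "measure M (S - L) = q (Suc k)"
    using finite_measure_Diff[OF Suc.prems(1) L(1) L(2)] L(3) Suc.prems(3) sumS by simp
  have iv: "{1..Suc k} = insert (Suc k) {1..k}" using Suc.hyps by auto
  have P1: "\<forall>i\<in>{1..Suc k}. B' i \<in> sets M \<and> B' i \<subseteq> S"
    using B(1) SL L(2) unfolding iv B'_def by auto
  have P2: "\<forall>i\<in>{1..Suc k}. \<forall>j\<in>{1..Suc k}. i \<noteq> j \<longrightarrow> B' i \<inter> B' j = {}"
    using B(1,2) unfolding iv B'_def by auto
  have P3: "(\<Union>i\<in>{1..Suc k}. B' i) = S"
  proof -
    have "(\<Union>i\<in>{1..Suc k}. B' i) = (S - L) \<union> (\<Union>i\<in>{1..k}. B i)"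
      unfolding iv B'_def by auto
    thus ?thesis using B(3) L(2) by auto
  qed
  have P4: "\<forall>i\<in>{1..Suc k}. measure M (B' i) = q i"
    using B(4) mSL unfolding iv B'_def by auto
  have P5: "\<forall>i\<in>{1..Suc k}. \<forall>j\<in>{1..Suc k}. i < j \<longrightarrow> (\<forall>x\<in>B' i. \<forall>y\<in>B' j. f x \<le> f y)"
  proof (intro ballI impI)
    fix i j x y assume i: "i \<in> {1..Suc k}" and j: "j \<in> {1..Suc k}" and ij: "i < j"
      and x: "x \<in> B' i" and y: "y \<in> B' j"
    show "f x \<le> f y"
    proof (cases "j = Suc k")
      case True
      hence "i \<in> {1..k}" using i ij by auto
      hence "x \<in> L" using x B(1) unfolding B'_def by auto
      moreover have "y \<in> S - L" using y True unfolding B'_def by auto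
      ultimately show ?thesis using L(4) by blast
    next
      case False
      hence "j \<in> {1..k}" "i \<in> {1..k}" using i j ij by auto
      moreover have "i \<noteq> Suc k" using \<open>i \<in> {1..k}\<close> by simp
      hence "x \<in> B i" "y \<in> B j" using x y False unfolding B'_def by simp_all
      ultimately show ?thesis using B(5) ij by blast
    qed
  qed
  show ?case by (rule exI[of _ B'], intro conjI P1 P2 P3 P4 P5)
qed


lemma final_from_Adm:
  fixes f :: "'a \<Rightarrow> real" and q :: "nat \<Rightarrow> real"
  assumes fm: "finite_measure M" and fmeas: "f \<in> borel_measurable M"
    and fpos: "\<forall>x\<in>space M. 0 \<le> f x"
    and ADM: "\<forall>a\<in>Adm. \<forall>A\<in>sets M. a - measure M A \<in> Adm"
    and SPL: "\<forall>E\<in>sets M. \<forall>r\<in>Adm. 0 \<le> r \<longrightarrow> r \<le> measure M E \<longrightarrow> (\<exists>C\<in>sets M. C \<subseteq> E \<and> measure M C = r)"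
    and ADD: "\<forall>a\<in>Adm. \<forall>b\<in>Adm. a + b \<in> Adm" and Z: "0 \<in> Adm"
    and k: "1 \<le> k" and qA: "\<forall>i\<in>{1..k}. q i \<in> Adm \<and> 0 \<le> q i"
    and qs: "(\<Sum>i=1..k. q i) = measure M (space M)"
  shows "\<exists>B\<in>partitions_nu_q M k q.
           \<forall>i\<in>{1..k}. \<forall>j\<in>{1..k}. i < j \<longrightarrow>
             (SUP x\<in>B i. ereal (f x)) \<le> (INF x\<in>B j. ereal (f x))"
proof -
  obtain B where B:
    "\<forall>i\<in>{1..k}. B i \<in> sets M \<and> B i \<subseteq> space M"
    "\<forall>i\<in>{1..k}. \<forall>j\<in>{1..k}. i \<noteq> j \<longrightarrow> B i \<inter> B j = {}"
    "(\<Union>i\<in>{1..k}. B i) = space M" "\<forall>i\<in>{1..k}. measure M (B i) = q i"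
    "\<forall>i\<in>{1..k}. \<forall>j\<in>{1..k}. i < j \<longrightarrow> (\<forall>x\<in>B i. \<forall>y\<in>B j. f x \<le> f y)"
    using part[OF fm fmeas fpos ADM SPL ADD Z k sets.top qA qs] by (elim exE conjE) (rule that)
  have "B \<in> partitions_nu_q M k q" unfolding partitions_nu_q_def using B(1-4) by blast
  moreover have "\<forall>i\<in>{1..k}. \<forall>j\<in>{1..k}. i < j \<longrightarrow>
             (SUP x\<in>B i. ereal (f x)) \<le> (INF x\<in>B j. ereal (f x))"
  proof (intro ballI impI)
    fix i j assume i: "i \<in> {1..k}" and j: "j \<in> {1..k}" and ij: "i < j"
    show "(SUP x\<in>B i. ereal (f x)) \<le> (INF x\<in>B j. ereal (f x))"
    proof (rule SUP_least, rule INF_greatest)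
      fix x y assume xy: "x \<in> B i" "y \<in> B j"
      have "f x \<le> f y" using B(5) i j ij xy by blast
      thus "ereal (f x) \<le> ereal (f y)" by simp
    qed
  qed
  ultimately show ?thesis by (rule rev_bexI[of B])
qed

theorem proposition1:
  fixes k :: nat and \<mu> \<nu> :: "'a measure" and f :: "'a \<Rightarrow> real" and q :: "nat \<Rightarrow> real"
  assumes "k \<ge> 1"
    and "finite_measure \<mu>" and "finite_measure \<nu>"
    and "sets \<mu> = sets \<nu>"
    and "absolutely_continuous \<nu> \<mu>"
    and "f \<in> borel_measurable \<nu>" and "\<forall>x\<in>space \<nu>. 0 \<le> f x"
    and "\<mu> = density \<nu> (\<lambda>x. ennreal (f x))"
    and "(nonatomic \<nu> \<and> (\<forall>i\<in>{1..k}. 0 \<le> q i))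
         \<or> (finite (space \<nu>) \<and> \<nu> = count_space (space \<nu>) \<and>
            (\<forall>i\<in>{1..k}. q i \<in> \<int> \<and> 0 \<le> q i))"
    and "(\<Sum>i=1..k. q i) = measure \<nu> (space \<nu>)"
  shows "\<exists>B\<in>partitions_nu_q \<nu> k q.
           \<forall>i\<in>{1..k}. \<forall>j\<in>{1..k}. i < j \<longrightarrow>
             (SUP x\<in>B i. ereal (f x)) \<le> (INF x\<in>B j. ereal (f x))"
proof -
  note fm = assms(3) and fmeas = assms(6) and fpos = assms(7) and k = assms(1) and qs = assms(10)
  from assms(9) show ?thesis
  proof
    assume A: "nonatomic \<nu> \<and> (\<forall>i\<in>{1..k}. 0 \<le> q i)"
    show ?thesis
    proof (rule final_from_Adm[OF fm fmeas fpos, of UNIV])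
      show "\<forall>E\<in>sets \<nu>. \<forall>r\<in>UNIV. 0 \<le> r \<longrightarrow> r \<le> measure \<nu> E \<longrightarrow> (\<exists>C\<in>sets \<nu>. C \<subseteq> E \<and> measure \<nu> C = r)"
        using sierpinski[OF fm] A by blast
      show "\<forall>i\<in>{1..k}. q i \<in> UNIV \<and> 0 \<le> q i" using A by blast
    qed (use k qs in auto)
  next
    assume A: "finite (space \<nu>) \<and> \<nu> = count_space (space \<nu>) \<and> (\<forall>i\<in>{1..k}. q i \<in> \<int> \<and> 0 \<le> q i)"
    define X where "X = space \<nu>"
    have finX: "finite X" using A by (simp add: X_def)
    have setsX: "sets \<nu> = Pow X" using A unfolding X_def by (metis sets_count_space)
    have mX: "measure \<nu> C = real (card C)" if "C \<subseteq> X" for C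
    proof -
      have "measure \<nu> C = measure (count_space X) C" using A unfolding X_def by metis
      also have "\<dots> = real (card C)" using that finX by (simp add: finite_subset)
      finally show ?thesis .
    qed
    show ?thesis
    proof (rule final_from_Adm[OF fm fmeas fpos, of \<int>])
      show "\<forall>a\<in>\<int>. \<forall>A\<in>sets \<nu>. a - measure \<nu> A \<in> \<int>"
        using mX setsX by auto
      show "\<forall>E\<in>sets \<nu>. \<forall>r\<in>\<int>. 0 \<le> r \<longrightarrow> r \<le> measure \<nu> E \<longrightarrow> (\<exists>C\<in>sets \<nu>. C \<subseteq> E \<and> measure \<nu> C = r)"
      proof (intro ballI impI)
        fix E r assume E: "E \<in> sets \<nu>" and r: "r \<in> \<int>" and r0: "0 \<le> r" and rE: "r \<le> measure \<nu> E"
        have EX: "E \<subseteq> X" using E setsX by blast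
        obtain z where z: "r = of_int z" using r Ints_cases by blast
        have "nat z \<le> card E" using rE r0 z mX[OF EX] by linarith
        then obtain C where C: "C \<subseteq> E" "card C = nat z" by (metis obtain_subset_with_card_n)
        have "measure \<nu> C = r" using mX[of C] C EX z r0 by simp
        moreover have "C \<in> sets \<nu>" using C EX setsX by blast
        ultimately show "\<exists>C\<in>sets \<nu>. C \<subseteq> E \<and> measure \<nu> C = r" using C by blast
      qed
      show "\<forall>i\<in>{1..k}. q i \<in> \<int> \<and> 0 \<le> q i" using A by blast
    qed (use k qs in auto)
  qed
qed

end
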